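(* Let $A\subseteq\mathbb{R}$ be an open invex set with respect to a function $\eta:A\times A\to\mathbb{R}$, and suppose $\eta$ satisfies Condition C. Let $a,b\in A$ with $a<a+\eta(b,a)$. Let $f:A\to(0,\infty)$ be preinvex on $A$ with respect to $\eta$, with $f$ Lebesgue integrable on $[a,a+\eta(b,a)]$. Then for every $\alpha>0$, \[ f\left(\frac{2a+\eta(b,a)}{2}\right)\le \frac{\Gamma(\alpha+1)}{2\eta^{\alpha}(b,a)}\Big[J_{a^+}^{\alpha}f\big(a+\eta(b,a)\big)+J_{(a+\eta(b,a))^-}^{\alpha}f(a)\Big]\le \frac{f(a)+f(a+\eta(b,a))}{2}\le\frac{f(a)+f(b)}{2}. \]
   Context: A set $A\subseteq\mathbb{R}$ is invex with respect to $\eta:A\times A\to\mathbb{R}$ if $x+t\eta(y,x)\in A$ for all $x,y\in A$ and $t\in[0,1]$. A function $f$ on an invex set $A$ is preinvex with respect to $\eta$ if $f(x+t\eta(y,x))\le(1-t)f(x)+tf(y)$ for all $x,y\in A$, $t\in[0,1]$. Condition C: for all $x,y\in A$ and $t\in[0,1]$, $\eta(y,y+t\eta(x,y))=-t\eta(x,y)$ and $\eta(x,y+t\eta(x,y))=(1-t)\eta(x,y)$. For $g\in L[c,d]$ and $\alpha>0$, the Riemann–Liouville fractional integrals are $J_{c^+}^{\alpha}g(x)=\frac{1}{\Gamma(\alpha)}\int_c^x(x-t)^{\alpha-1}g(t)\,dt$ for $x>c$ and $J_{d^-}^{\alpha}g(x)=\frac{1}{\Gamma(\alpha)}\int_x^d(t-x)^{\alpha-1}g(t)\,dt$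 for $x<d$; here $\eta^{\alpha}(b,a)$ means $(\eta(b,a))^{\alpha}$. *)

theory Defs
  imports "HOL-Analysis.Analysis"
begin

definition invex :: "real set \<Rightarrow> (real \<Rightarrow> real \<Rightarrow> real) \<Rightarrow> bool" where
  "invex A \<eta> \<longleftrightarrow> (\<forall>x\<in>A. \<forall>y\<in>A. \<forall>t\<in>{0..1}. x + t * \<eta> y x \<in> A)"

definition preinvex :: "(real \<Rightarrow> real) \<Rightarrow> real set \<Rightarrow> (real \<Rightarrow> real \<Rightarrow> real) \<Rightarrow> bool" where
  "preinvex f A \<eta> \<longleftrightarrow> (\<forall>x\<in>A. \<forall>y\<in>A. \<forall>t\<in>{0..1}.
      f (x + t * \<eta> y x) \<le> (1 - t) * f x + t * f y)"

definition condition_C :: "real set \<Rightarrow> (real \<Rightarrow> real \<Rightarrow> real) \<Rightarrow> bool" where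
  "condition_C A \<eta> \<longleftrightarrow> (\<forall>x\<in>A. \<forall>y\<in>A. \<forall>t\<in>{0..1}.
      \<eta> y (y + t * \<eta> x y) = - t * \<eta> x y \<and>
      \<eta> x (y + t * \<eta> x y) = (1 - t) * \<eta> x y)"

definition RL_left :: "real \<Rightarrow> real \<Rightarrow> (real \<Rightarrow> real) \<Rightarrow> real \<Rightarrow> real" where
  "RL_left \<alpha> c g x = (1 / Gamma \<alpha>) * (LINT t:{c..x}|lborel. (x - t) powr (\<alpha> - 1) * g t)"

definition RL_right :: "real \<Rightarrow> real \<Rightarrow> (real \<Rightarrow> real) \<Rightarrow> real \<Rightarrow> real" where
  "RL_right \<alpha> d g x = (1 / Gamma \<alpha>) * (LINT t:{x..d}|lborel. (t - x) powr (\<alpha> - 1) * g t)"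

end

theory Submission
  imports Defs
begin

lemma eta_line:
  assumes inv: "invex A \<eta>" and C: "condition_C A \<eta>" and aA: "a \<in> A" and bA: "b \<in> A"
    and p: "p \<in> {0..1}" and q: "q \<in> {0..1}"
  shows "\<eta> (a + p * \<eta> b a) (a + q * \<eta> b a) = (p - q) * \<eta> b a"
proof -
  define e where "e = \<eta> b a"
  have inA: "a + s * e \<in> A" if "s \<in> {0..1}" for s
    using inv aA bA that unfolding invex_def e_def by blast
  have e1: "\<eta> a (a + s * e) = - s * e" if "s \<in> {0..1}" for s
    using C aA bA that unfolding condition_C_def e_def by blast
  have e2: "\<eta> b (a + s * e) = (1 - s) * e" if "s \<in> {0..1}" for s
    using C aA bA that unfolding condition_C_def e_def by blast
  have yA: "a + p * e \<in> A" using inA p by blast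
  consider "p = q" | "p < q" | "q < p" by linarith
  then have "\<eta> (a + p * e) (a + q * e) = (p - q) * e"
  proof cases
    case 1
    have "\<eta> (a + p * e) ((a + p * e) + 0 * \<eta> b (a + p * e)) = - 0 * \<eta> b (a + p * e)"
      using C yA bA unfolding condition_C_def by (meson atLeastAtMost_iff order_refl zero_le_one)
    then show ?thesis using 1 by simp
  next
    case 2
    then have p1: "p < 1" using q by auto
    define t where "t = (q - p) / (1 - p)"
    have t: "t \<in> {0..1}" using 2 p1 q unfolding t_def by (auto simp: field_simps)
    have "\<eta> (a + p * e) ((a + p * e) + t * \<eta> b (a + p * e)) = - t * \<eta> b (a + p * e)"
      using C yA bA t unfolding condition_C_def by blast
    moreover have h: "\<eta> b (a + p * e) = (1 - p) * e" using e2 p by blast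
    moreover have k: "t * ((1 - p) * e) = (q - p) * e" using p1 unfolding t_def by (simp add: field_simps)
    moreover have "(a + p * e) + t * \<eta> b (a + p * e) = a + q * e" unfolding h k by (simp add: algebra_simps)
    ultimately show ?thesis by (simp add: algebra_simps)
  next
    case 3
    then have p0: "p > 0" using q by auto
    define t where "t = (p - q) / p"
    have t: "t \<in> {0..1}" using 3 p0 q unfolding t_def by (auto simp: field_simps)
    have "\<eta> (a + p * e) ((a + p * e) + t * \<eta> a (a + p * e)) = - t * \<eta> a (a + p * e)"
      using C yA aA t unfolding condition_C_def by blast
    moreover have h: "\<eta> a (a + p * e) = - p * e" using e1 p by blast
    moreover have k: "t * (- p * e) = (q - p) * e" using p0 unfolding t_def by (simp add: field_simps)
    moreover have "(a + p * e) + t * \<eta> a (a + p * e) = a + q * e" unfolding h k by (simp add: algebra_simps)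
    ultimately show ?thesis by (simp add: algebra_simps)
  qed
  then show ?thesis by (simp add: e_def)
qed


lemma reflect_int:
  fixes k :: "real \<Rightarrow> real" and a c :: real
  assumes "(k has_integral I) {a..c}"
  shows "((\<lambda>x. k (a + c - x)) has_integral I) {a..c}"
proof -
  have "((\<lambda>x. k (-x)) has_integral I) {-c..-a}" using assms by simp
  from has_integral_shift_real_ivl[OF this, of "-(a+c)"]
  show ?thesis by (simp add: algebra_simps)
qed

lemma sint:
  fixes g f :: "real \<Rightarrow> real"
  assumes gi: "(g has_integral I) S" and g0: "\<forall>x\<in>S. 0 \<le> g x"
    and gm: "g \<in> borel_measurable borel" and fi: "set_integrable lborel S f"
    and fb: "\<forall>x\<in>S. \<bar>f x\<bar> \<le> B" and Sm: "S \<in> sets borel"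
  shows "set_integrable lborel S (\<lambda>x. g x * f x)"
proof -
  have "g absolutely_integrable_on S"
    using gi g0 by (intro nonnegative_absolutely_integrable_1) (auto simp: integrable_on_def)
  then have "integrable lebesgue (\<lambda>x. indicator S x *\<^sub>R g x)" unfolding set_integrable_def .
  moreover have "(\<lambda>x. indicator S x *\<^sub>R g x) \<in> borel_measurable lborel"
    using gm Sm by measurable
  ultimately have gl: "integrable lborel (\<lambda>x. indicator S x *\<^sub>R g x)"
    using integrable_completion by blast
  have fm: "(\<lambda>x. indicator S x *\<^sub>R f x) \<in> borel_measurable lborel"
    using fi unfolding set_integrable_def by (rule borel_measurable_integrable)
  have "(\<lambda>x. g x * (indicator S x *\<^sub>R f x)) \<in> borel_measurable lborel"
    using gm fm by measurable
  moreover have "(\<lambda>x. g x * (indicator S x *\<^sub>R f x)) = (\<lambda>x. indicator S x *\<^sub>R (g x * f x))"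
    by (auto simp: indicator_def)
  ultimately have pm: "(\<lambda>x. indicator S x *\<^sub>R (g x * f x)) \<in> borel_measurable lborel" by simp
  have Bi: "integrable lborel (\<lambda>x. B * (indicator S x *\<^sub>R g x))"
    using gl by simp
  have "integrable lborel (\<lambda>x. indicator S x *\<^sub>R (g x * f x))"
  proof (rule Bochner_Integration.integrable_bound[OF Bi])
    show "(\<lambda>x. indicator S x *\<^sub>R (g x * f x)) \<in> borel_measurable lborel" by (rule pm)
    show "AE x in lborel. norm (indicator S x *\<^sub>R (g x * f x)) \<le> norm (B * (indicator S x *\<^sub>R g x))"
    proof (rule AE_I2)
      fix x
      show "norm (indicator S x *\<^sub>R (g x * f x)) \<le> norm (B * (indicator S x *\<^sub>R g x))"
      proof (cases "x \<in> S")
        case True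
        then have "\<bar>g x * f x\<bar> \<le> \<bar>B * g x\<bar>"
        proof -
          have "g x * \<bar>f x\<bar> \<le> g x * B" using g0 fb True by (simp add: mult_left_mono)
          also have "\<dots> \<le> \<bar>B\<bar> * g x" using g0 True by (simp add: mult.commute mult_right_mono)
          finally show ?thesis using g0 True by (simp add: abs_mult)
        qed
        then show ?thesis using True by simp
      qed simp
    qed
  qed
  then show ?thesis unfolding set_integrable_def .
qed


theorem theorem2p1:
  fixes A :: "real set" and \<eta> :: "real \<Rightarrow> real \<Rightarrow> real" and f :: "real \<Rightarrow> real"
    and a b \<alpha> :: real
  assumes "open A" and "invex A \<eta>" and "condition_C A \<eta>"
    and "a \<in> A" and "b \<in> A" and "a < a + \<eta> b a"
    and "\<forall>x\<in>A. f x > 0"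
    and "preinvex f A \<eta>"
    and "set_integrable lborel {a..a + \<eta> b a} f"
    and "\<alpha> > 0"
  shows "f ((2 * a + \<eta> b a) / 2)
           \<le> Gamma (\<alpha> + 1) / (2 * (\<eta> b a) powr \<alpha>) *
              (RL_left \<alpha> a f (a + \<eta> b a) + RL_right \<alpha> (a + \<eta> b a) f a)
       \<and> Gamma (\<alpha> + 1) / (2 * (\<eta> b a) powr \<alpha>) *
              (RL_left \<alpha> a f (a + \<eta> b a) + RL_right \<alpha> (a + \<eta> b a) f a)
           \<le> (f a + f (a + \<eta> b a)) / 2
       \<and> (f a + f (a + \<eta> b a)) / 2 \<le> (f a + f b) / 2"
proof -
  note inv = assms(2) and C = assms(3) and aA = assms(4) and bA = assms(5)
  note fpos = assms(7) and pre = assms(8) and fint = assms(9) and \<alpha>0 = assms(10)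
  define e where "e = \<eta> b a"
  define c where "c = a + e"
  define S where "S = {a..c}"
  have e0: "e > 0" using assms(6) unfolding e_def by simp
  have inA: "a + s * e \<in> A" if "s \<in> {0..1}" for s
    using inv aA bA that unfolding invex_def e_def by blast
  have SA: "x \<in> A" if "x \<in> S" for x
  proof -
    have "(x - a) / e \<in> {0..1}" using that e0 unfolding S_def c_def by (auto simp: field_simps)
    from inA[OF this] show ?thesis using e0 by simp
  qed
  have conv: "f (x + l * (y - x)) \<le> (1 - l) * f x + l * f y"
    if "x \<in> S" "y \<in> S" "l \<in> {0..1}" for x y l
  proof -
    define p where "p = (x - a) / e"
    define q where "q = (y - a) / e"
    have p: "p \<in> {0..1}" using that e0 unfolding S_def c_def p_def by (auto simp: field_simps)
    have q: "q \<in> {0..1}" using that e0 unfolding S_def c_def q_def by (auto simp: field_simps)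
    have xp: "x = a + p * e" and yq: "y = a + q * e" using e0 unfolding p_def q_def by auto
    have et: "\<eta> (a + q * e) (a + p * e) = (q - p) * e"
      using eta_line[OF inv C aA bA q p] unfolding e_def .
    have "f ((a + p * e) + l * \<eta> (a + q * e) (a + p * e)) \<le> (1 - l) * f (a + p * e) + l * f (a + q * e)"
      using pre inA[OF p] inA[OF q] that(3) unfolding preinvex_def by blast
    moreover have "(a + p * e) + l * \<eta> (a + q * e) (a + p * e) = x + l * (y - x)"
      unfolding et xp yq by (simp add: algebra_simps)
    ultimately show ?thesis using xp yq by simp
  qed
  have aS: "a \<in> S" and cS: "c \<in> S" using e0 unfolding S_def c_def by auto
  have rS: "a + c - x \<in> S" if "x \<in> S" for x using that unfolding S_def by auto
  define m where "m = (2 * a + e) / 2"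
  have mid: "2 * f m \<le> f x + f (a + c - x)" if "x \<in> S" for x
  proof -
    have "f (x + (1/2) * ((a + c - x) - x)) \<le> (1 - 1/2) * f x + (1/2) * f (a + c - x)"
      using conv[OF that rS[OF that], of "1/2"] by simp
    moreover have "x + (1/2) * ((a + c - x) - x) = m" unfolding m_def c_def by (simp add: field_simps)
    ultimately show ?thesis by simp
  qed
  have chord0: "f x \<le> (1 - (x - a) / e) * f a + (x - a) / e * f c" if "x \<in> S" for x
  proof -
    have l: "(x - a) / e \<in> {0..1}" using that e0 unfolding S_def c_def by (auto simp: field_simps)
    have eq: "a + (x - a) / e * (c - a) = x" using e0 unfolding c_def by simp
    show ?thesis
      using conv[OF aS cS l] unfolding eq .
  qed
  have chord: "f x \<le> f a + (x - a) / e * (f c - f a)" if "x \<in> S" for x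
  proof -
    note chord0[OF that]
    moreover have "(1 - (x - a) / e) * f a + (x - a) / e * f c = f a + (x - a) / e * (f c - f a)"
      by (simp add: right_diff_distrib left_diff_distrib)
    ultimately show ?thesis by linarith
  qed
  have upper: "f x + f (a + c - x) \<le> f a + f c" if "x \<in> S" for x
  proof -
    have "f x + f (a + c - x) \<le> (f a + (x - a) / e * (f c - f a)) + (f a + (a + c - x - a) / e * (f c - f a))"
      using chord[OF that] chord[OF rS[OF that]] by simp
    also have "\<dots> = f a + f c" using e0 unfolding c_def by (simp add: field_simps)
    finally show ?thesis .
  qed
  have fcb: "f c \<le> f b"
    using pre aA bA unfolding preinvex_def c_def e_def
    by (metis atLeastAtMost_iff diff_self mult_1 mult_zero_left add_0 order_refl zero_le_one)
  have fS: "f x > 0" if "x \<in> S" for x using fpos SA[OF that] by blast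
  have fB: "\<forall>x\<in>S. \<bar>f x\<bar> \<le> f a + f c"
  proof
    fix x assume x: "x \<in> S"
    have l: "(x - a) / e \<in> {0..1}" using x e0 unfolding S_def c_def by (auto simp: field_simps)
    have "f x \<le> (1 - (x - a) / e) * f a + (x - a) / e * f c"
      using chord0[OF x] .
    also have "\<dots> \<le> f a + f c"
    proof -
      define l' where "l' = (x - a) / e"
      have "0 \<le> l'" "l' \<le> 1" using l unfolding l'_def by auto
      then have "(1 - l') * f a \<le> f a" "l' * f c \<le> f c"
        using fS[OF aS] fS[OF cS] by (simp_all add: mult_left_le_one_le mult_left_le)
      then show ?thesis unfolding l'_def by linarith
    qed
    finally show "\<bar>f x\<bar> \<le> f a + f c" using fS[OF x] by simp
  qed
  define g1 where "g1 = (\<lambda>x. (c - x) powr (\<alpha> - 1))"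
  define g2 where "g2 = (\<lambda>x. (x - a) powr (\<alpha> - 1))"
  define W where "W = e powr \<alpha> / \<alpha>"
  have H2: "(g2 has_integral W) S"
  proof -
    have "((\<lambda>x. x powr (\<alpha> - 1)) has_integral (e powr (\<alpha> - 1 + 1) / (\<alpha> - 1 + 1))) {0..e}"
      using has_integral_powr_from_0[of "\<alpha> - 1" e] \<alpha>0 e0 by simp
    from has_integral_shift_real_ivl[OF this, of "-a"]
    show ?thesis unfolding g2_def W_def S_def c_def by (simp add: add.commute)
  qed
  have H1: "(g1 has_integral W) S"
  proof -
    have "((\<lambda>x. g2 (a + c - x)) has_integral W) S" using reflect_int[OF H2[unfolded S_def]] unfolding S_def .
    moreover have "(\<lambda>x. g2 (a + c - x)) = g1" unfolding g1_def g2_def by (simp add: algebra_simps)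
    ultimately show ?thesis by simp
  qed
  have Sm: "S \<in> sets borel" unfolding S_def by simp
  have fint': "set_integrable lborel S f" using fint unfolding S_def c_def e_def .
  have g1m: "g1 \<in> borel_measurable borel" unfolding g1_def by measurable
  have g2m: "g2 \<in> borel_measurable borel" unfolding g2_def by measurable
  have g10: "\<forall>x\<in>S. 0 \<le> g1 x" and g20: "\<forall>x\<in>S. 0 \<le> g2 x" unfolding g1_def g2_def by auto
  have si1: "set_integrable lborel S (\<lambda>x. g1 x * f x)" by (rule sint[OF H1 g10 g1m fint' fB Sm])
  have si2: "set_integrable lborel S (\<lambda>x. g2 x * f x)" by (rule sint[OF H2 g20 g2m fint' fB Sm])
  define I1 where "I1 = integral S (\<lambda>x. g1 x * f x)"
  define I2 where "I2 = integral S (\<lambda>x. g2 x * f x)"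
  have L1: "(LINT x:S|lborel. g1 x * f x) = I1" using set_borel_integral_eq_integral(2)[OF si1] unfolding I1_def .
  have L2: "(LINT x:S|lborel. g2 x * f x) = I2" using set_borel_integral_eq_integral(2)[OF si2] unfolding I2_def .
  have J1: "((\<lambda>x. g1 x * f x) has_integral I1) S"
    using set_borel_integral_eq_integral(1)[OF si1] unfolding I1_def by (rule integrable_integral)
  have J2: "((\<lambda>x. g2 x * f x) has_integral I2) S"
    using set_borel_integral_eq_integral(1)[OF si2] unfolding I2_def by (rule integrable_integral)
  have K1: "((\<lambda>x. g2 x * f (a + c - x)) has_integral I1) S"
  proof -
    have "((\<lambda>x. g1 (a + c - x) * f (a + c - x)) has_integral I1) S"
      using reflect_int[OF J1[unfolded S_def]] unfolding S_def .
    moreover have "\<And>x. g1 (a + c - x) = g2 x" unfolding g1_def g2_def by (simp add: algebra_simps)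
    ultimately show ?thesis by simp
  qed
  have K2: "((\<lambda>x. g1 x * f (a + c - x)) has_integral I2) S"
  proof -
    have "((\<lambda>x. g2 (a + c - x) * f (a + c - x)) has_integral I2) S"
      using reflect_int[OF J2[unfolded S_def]] unfolding S_def .
    moreover have "\<And>x. g2 (a + c - x) = g1 x" unfolding g1_def g2_def by (simp add: algebra_simps)
    ultimately show ?thesis by simp
  qed
  define h where "h = (\<lambda>x. (g1 x + g2 x) * (f x + f (a + c - x)))"
  have Hh: "(h has_integral (2 * (I1 + I2))) S"
  proof -
    have "((\<lambda>x. g1 x * f x + g2 x * f x + (g2 x * f (a + c - x) + g1 x * f (a + c - x)))
             has_integral (I1 + I2 + (I1 + I2))) S"
      by (intro has_integral_add J1 J2 K1 K2)
    moreover have "(\<lambda>x. g1 x * f x + g2 x * f x + (g2 x * f (a + c - x) + g1 x * f (a + c - x))) = h"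
      unfolding h_def by (auto simp: algebra_simps)
    ultimately show ?thesis by (simp add: algebra_simps)
  qed
  have Hw: "((\<lambda>x. g1 x + g2 x) has_integral (2 * W)) S"
    using has_integral_add[OF H1 H2] by simp
  have low: "2 * f m * (2 * W) \<le> 2 * (I1 + I2)"
  proof (rule has_integral_le[OF has_integral_mult_right[OF Hw, of "2 * f m"] Hh])
    fix x assume x: "x \<in> S"
    have "0 \<le> g1 x + g2 x" using g10 g20 x by auto
    then show "2 * f m * (g1 x + g2 x) \<le> h x"
      unfolding h_def using mid[OF x] by (metis mult.commute mult_left_mono)
  qed
  have up: "2 * (I1 + I2) \<le> (f a + f c) * (2 * W)"
  proof (rule has_integral_le[OF Hh has_integral_mult_right[OF Hw, of "f a + f c"]])
    fix x assume x: "x \<in> S"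
    have "0 \<le> g1 x + g2 x" using g10 g20 x by auto
    then show "h x \<le> (f a + f c) * (g1 x + g2 x)"
      unfolding h_def using upper[OF x] by (metis mult.commute mult_left_mono)
  qed
  have Gp: "Gamma \<alpha> > 0" using \<alpha>0 by simp
  have G1: "Gamma (\<alpha> + 1) = \<alpha> * Gamma \<alpha>"
    using \<alpha>0 by (intro Gamma_plus1) (auto elim!: nonpos_Ints_cases)
  have RL: "RL_left \<alpha> a f (a + \<eta> b a) + RL_right \<alpha> (a + \<eta> b a) f a = (I1 + I2) / Gamma \<alpha>"
    unfolding RL_left_def RL_right_def e_def[symmetric] c_def[symmetric] S_def[symmetric]
    using L1 L2 unfolding g1_def g2_def by (simp add: add_divide_distrib)
  have ep: "e powr \<alpha> > 0" using e0 by simp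
  have M: "Gamma (\<alpha> + 1) / (2 * (\<eta> b a) powr \<alpha>) *
              (RL_left \<alpha> a f (a + \<eta> b a) + RL_right \<alpha> (a + \<eta> b a) f a) = (I1 + I2) / (2 * W)"
  proof -
    have "Gamma (\<alpha> + 1) / (2 * (\<eta> b a) powr \<alpha>) *
              (RL_left \<alpha> a f (a + \<eta> b a) + RL_right \<alpha> (a + \<eta> b a) f a)
          = \<alpha> * Gamma \<alpha> / (2 * e powr \<alpha>) * ((I1 + I2) / Gamma \<alpha>)"
      unfolding RL G1 e_def by simp
    also have "\<dots> = (I1 + I2) / (2 * W)"
    proof -
      have n1: "Gamma \<alpha> \<noteq> 0" "e powr \<alpha> \<noteq> 0" "\<alpha> \<noteq> 0" using Gp ep \<alpha>0 by linarith+
      show ?thesis unfolding W_def using n1 by (simp add: field_simps)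
    qed
    finally show ?thesis .
  qed
  have Wp: "W > 0" unfolding W_def using ep \<alpha>0 by simp
  have r1: "f m \<le> (I1 + I2) / (2 * W)" using low Wp by (simp add: field_simps)
  have r2: "(I1 + I2) / (2 * W) \<le> (f a + f c) / 2" using up Wp by (simp add: field_simps)
  show ?thesis unfolding M using r1 r2 fcb unfolding m_def c_def e_def by simp
qed

end
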